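(* Let $k,d\geq1$ and $L\geq4(k+1)d$, and let $\mathcal{T}^{d+1}$ be the teacher class defined in the context, with $H_\bullet=\{(2,0),(1,1)\}$. For every (possibly randomized) DFF algorithm $\mathcal{A}$, \[M^L_k(\mathcal{A},\mathcal{T}^{d+1},H_\bullet)\geq(k+1)d-1.\]
   Context: Setting. A teacher over $\mathcal{X},\mathcal{Y},\Phi$ ($\bot$ a null symbol) is a pair $T=(\ell,\psi)$ with $\ell:\mathcal{X}\to\mathcal{Y}$ and $\psi:\mathcal{X}\times\mathcal{X}\to\Phi\cup\{\bot\}$ such that whenever $\ell(x)\neq\ell(\hat x)$, $\phi:=\psi(x,\hat x)\in\Phi$, $\phi(x)=1$ and $\phi(\hat x)=0$. A teacher class is a set of teachers. A history is a non-empty $H\subseteq\mathcal{X}\times\mathcal{Y}$; a teacher $(\ell,\psi)$ is consistent with $H$ if $\ell(x)=y$ for all $(x,y)\in H$; $\mathcal{T}_H$ is the set of teachers in $\mathcal{T}$ consistent with $H$. DFF protocol. A DFF algorithm is given $H$ in advance. In each round $t$: an example $x_t$ arrives; the algorithm outputs $(\hat x_t,\hat y_t)\in H\cup\{(x_s,y_s):s<t\}$ (predicted label $\hat y_t$, explanation $\hat x_t$); if $\hat y_t=y_t$ (the provided label of $x_t$) it learns only that it was correct; otherwise (a mistake) it receives $y_t$ and a feature $\phi_t$. Non-realizable mistake bound with adaptive adversary. An interaction over $L$ rounds produces $S=((x_t,y_t,\hat x_t,\hat y_t,\phi_t))_{t\in[L]}$, with $\phi_t=\bot$ when $\hat y_t=y_t$.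 An adversary, in each round $t$, chooses $(x_t,y_t,\psi_t)$ with $\psi_t:\mathcal{X}\times\mathcal{X}\to\Phi\cup\{\bot\}$ as a function of the past interaction $S_{t-1}$; then the algorithm chooses $(\hat x_t,\hat y_t)$ (possibly randomly) as a function of $S_{t-1}$ and $x_t$; then, if $\hat y_t\neq y_t$, $\phi_t=\psi_t(x_t,\hat x_t)$ is revealed together with $y_t$. $S$ is $k$-consistent with a teacher $(f,\psi)$ if there is $E\subseteq[L]$, $|E|\leq k$, such that for all $t\in[L]\setminus E$, $f(x_t)=y_t$ and, if $\hat y_t\neq y_t$, $\psi(x_t,\hat x_t)=\phi_t$. $M^L_k(\mathcal{A},\mathcal{T},H)$ is the supremum, over all adversaries whose interaction with $\mathcal{A}$ produces with probability $1$ a sequence that is $k$-consistent with some teacher in $\mathcal{T}_H$, of the expected number of mistakes of $\mathcal{A}$ over $L$ rounds. Construction. $\mathcal{X}=\mathbb{N}=\{1,2,\dots\}$, $\mathcal{Y}=\{0,1\}$, $\Phi=\{0,1\}^{\mathcal{X}}$. For $i\geq0$ let $\mathcal{X}_i=\{2^i,2^i+1,\dots,2^{i+1}-1\}$. For $i\geq1$, $\mathcal{F}^d_i$ is the set of all $f:\mathcal{X}\to\{0,1\}$ with $f(1)=1$ and $f(x)=0$ for all $x\notin\mathcal{X}_i\cup\{1\}$ (arbitrary on $\mathcal{X}_i$). Let $p_i$ be a prime with $p_i\geq2^{|\mathcal{X}_i|}$ and fix an injective map $b_i:\mathcal{F}^d_i\to\mathbb{F}_{p_i}$. For $\bar c=(c_0,\dots,c_{d-1})\in\mathbb{F}_{p_i}^d$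 let $P'[\bar c](z)=(c_0+\sum_{j=1}^{d-1}c_jz^j)\bmod p_i$ and $P[\bar c]:\mathcal{X}_i\to\mathbb{N}$, $P[\bar c](x)=2^{i+1}+P'[\bar c](x-2^i+1)$ (viewing $P'$ values in $\{0,\dots,p_i-1\}$). For $x_1,\dots,x_l\in\mathcal{X}$ let $\mathbb{I}[x_1,\dots,x_l]$ be the feature equal to $1$ exactly on $\{x_1,\dots,x_l\}$. For $f\in\mathcal{F}^d_i$ and $\bar a:\mathcal{X}_i\times\{0,1\}\to\mathbb{F}^d_{p_i}$ define $\psi^f_{\bar a}(x,\hat x)=\mathbb{I}[x,\,P[\bar a(\hat x,f(x))](x)]$ if $x,\hat x\in\mathcal{X}_i$, and $\psi^f_{\bar a}(x,\hat x)=\mathbb{I}[x]$ otherwise. Let $\Psi_f=\{\psi^f_{\bar a}:\bar a:\mathcal{X}_i\times\{0,1\}\to\mathbb{F}^d_{p_i}$ such that for all $\hat x\in\mathcal{X}_i$ with $f(\hat x)=1$, the constant coefficient of $\bar a(\hat x,0)$ equals $b_i(f)\}$. Then $\mathcal{T}^d_i=\{(f,\psi):f\in\mathcal{F}^d_i,\psi\in\Psi_f\}$ and $\mathcal{T}^{d+1}=\bigcup_{i\geq1}\mathcal{T}^d_i$. *)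

theory Defs
  imports "HOL-Probability.Probability"
begin

text \<open>The instance space is X = {1,2,...}, represented by nat
(elements of X are the n with n >= 1). Labels Y = {0,1} are represented by bool
(0 = False, 1 = True). A feature in Phi = {0,1}^X is represented by a function
nat => bool whose value at the non-element 0 is False. The null symbol is None.\<close>

type_synonym feature = "nat \<Rightarrow> bool"
type_synonym expl = "nat \<Rightarrow> nat \<Rightarrow> feature option"
type_synonym teacher = "(nat \<Rightarrow> bool) \<times> expl"
\<comment> \<open>one round of an interaction: (x_t, y_t, xhat_t, yhat_t, phi_t)\<close>
type_synonym entry = "nat \<times> bool \<times> nat \<times> bool \<times> feature option"
\<comment> \<open>randomized DFF algorithm: distribution of (xhat_t, yhat_t) given S_(t-1) and x_t\<close>
type_synonym alg = "entry list \<Rightarrow> nat \<Rightarrow> (nat \<times> bool) pmf"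
\<comment> \<open>adaptive adversary: (x_t, y_t, psi_t) as a function of S_(t-1)\<close>
type_synonym adv = "entry list \<Rightarrow> nat \<times> bool \<times> expl"

definition is_feature :: "feature \<Rightarrow> bool" where
  "is_feature \<phi> \<longleftrightarrow> \<not> \<phi> 0"

definition consistent_teachers :: "teacher set \<Rightarrow> (nat \<times> bool) set \<Rightarrow> teacher set" where
  "consistent_teachers T H = {Te \<in> T. \<forall>(x, y) \<in> H. fst Te x = y}"

definition dff_alg :: "(nat \<times> bool) set \<Rightarrow> alg \<Rightarrow> bool" where
  "dff_alg H A \<longleftrightarrow>
     (\<forall>S x. set_pmf (A S x) \<subseteq> H \<union> (\<lambda>(x, y, _, _, _). (x, y)) ` set S)"

definition adm_adv :: "adv \<Rightarrow> bool" where
  "adm_adv Adv \<longleftrightarrow>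
     (\<forall>S. 1 \<le> fst (Adv S) \<and>
          (\<forall>u v \<phi>. snd (snd (Adv S)) u v = Some \<phi> \<longrightarrow> is_feature \<phi>))"

primrec run :: "alg \<Rightarrow> adv \<Rightarrow> nat \<Rightarrow> entry list pmf" where
  "run A Adv 0 = return_pmf []"
| "run A Adv (Suc t) =
     bind_pmf (run A Adv t) (\<lambda>S. case Adv S of (x, y, \<psi>) \<Rightarrow>
       map_pmf (\<lambda>(xh, yh). S @ [(x, y, xh, yh, if yh = y then None else \<psi> x xh)]) (A S x))"

definition num_mistakes :: "entry list \<Rightarrow> nat" where
  "num_mistakes S = length (filter (\<lambda>(x, y, xh, yh, \<phi>). yh \<noteq> y) S)"

definition expected_mistakes :: "alg \<Rightarrow> adv \<Rightarrow> nat \<Rightarrow> real" where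
  "expected_mistakes A Adv L =
     measure_pmf.expectation (run A Adv L) (\<lambda>S. real (num_mistakes S))"

definition k_consistent :: "nat \<Rightarrow> teacher \<Rightarrow> entry list \<Rightarrow> bool" where
  "k_consistent k Te S \<longleftrightarrow>
     (\<exists>E \<subseteq> {..<length S}. card E \<le> k \<and>
        (\<forall>t < length S. t \<notin> E \<longrightarrow>
           (case S ! t of (x, y, xh, yh, \<phi>) \<Rightarrow>
              fst Te x = y \<and> (yh \<noteq> y \<longrightarrow> snd Te x xh = \<phi>))))"

definition mistake_bound :: "nat \<Rightarrow> nat \<Rightarrow> alg \<Rightarrow> teacher set \<Rightarrow> (nat \<times> bool) set \<Rightarrow> ereal" where
  "mistake_bound L k A T H =
     (SUP Adv \<in> {Adv. adm_adv Adv \<and>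
                   (\<forall>S \<in> set_pmf (run A Adv L).
                      \<exists>Te \<in> consistent_teachers T H. k_consistent k Te S)}.
        ereal (expected_mistakes A Adv L))"

definition Xblock :: "nat \<Rightarrow> nat set" where
  "Xblock i = {2 ^ i ..< 2 ^ (i + 1)}"

definition Fcls :: "nat \<Rightarrow> (nat \<Rightarrow> bool) set" where
  "Fcls i = {f. f 1 \<and> (\<forall>x. x \<notin> Xblock i \<union> {1} \<longrightarrow> \<not> f x)}"

definition Ppoly' :: "nat \<Rightarrow> nat \<Rightarrow> nat list \<Rightarrow> nat \<Rightarrow> nat" where
  "Ppoly' d p c z = (c ! 0 + (\<Sum>j \<in> {1..<d}. c ! j * z ^ j)) mod p"

definition Ppoly :: "nat \<Rightarrow> nat \<Rightarrow> nat \<Rightarrow> nat list \<Rightarrow> nat \<Rightarrow> nat" where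
  "Ppoly d p i c x = 2 ^ (i + 1) + Ppoly' d p c (x + 1 - 2 ^ i)"

definition indic :: "nat set \<Rightarrow> feature" where
  "indic A = (\<lambda>z. z \<in> A)"

definition psi_a :: "nat \<Rightarrow> nat \<Rightarrow> nat \<Rightarrow> (nat \<Rightarrow> bool) \<Rightarrow> (nat \<Rightarrow> bool \<Rightarrow> nat list) \<Rightarrow> expl" where
  "psi_a d p i f a = (\<lambda>x xh.
     if x \<in> Xblock i \<and> xh \<in> Xblock i
     then Some (indic {x, Ppoly d p i (a xh (f x)) x})
     else Some (indic {x}))"

definition Psi_cls :: "nat \<Rightarrow> nat \<Rightarrow> nat \<Rightarrow> ((nat \<Rightarrow> bool) \<Rightarrow> nat) \<Rightarrow> (nat \<Rightarrow> bool) \<Rightarrow> expl set" where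
  "Psi_cls d p i bi f =
     {psi_a d p i f a | a.
        (\<forall>xh \<in> Xblock i. \<forall>v. length (a xh v) = d \<and> (\<forall>j < d. a xh v ! j < p)) \<and>
        (\<forall>xh \<in> Xblock i. f xh \<longrightarrow> a xh False ! 0 = bi f)}"

definition Tcls_i :: "nat \<Rightarrow> nat \<Rightarrow> nat \<Rightarrow> ((nat \<Rightarrow> bool) \<Rightarrow> nat) \<Rightarrow> teacher set" where
  "Tcls_i d p i bi = {(f, \<psi>) | f \<psi>. f \<in> Fcls i \<and> \<psi> \<in> Psi_cls d p i bi f}"

definition Tcls :: "nat \<Rightarrow> (nat \<Rightarrow> nat) \<Rightarrow> (nat \<Rightarrow> (nat \<Rightarrow> bool) \<Rightarrow> nat) \<Rightarrow> teacher set" where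
  "Tcls d p b = (\<Union>i \<in> {1..}. Tcls_i d (p i) i (b i))"

definition H_bullet :: "(nat \<times> bool) set" where
  "H_bullet = {(2, False), (1, True)}"

end

theory Submission
  imports Defs "HOL-Computational_Algebra.Polynomial" "HOL-Computational_Algebra.Primes"
begin


fun Vf :: "nat \<Rightarrow> nat \<Rightarrow> nat \<Rightarrow> real" where
  "Vf M 0 m = real (min m M)"
| "Vf M (Suc r) m = (if M \<le> m then real M else (Vf M r (Suc m) + Vf M r m) / 2)"

lemma Vf_top: "M \<le> m \<Longrightarrow> Vf M r m = real M"
  by (cases r) auto

lemma Vf_le: "Vf M r m \<le> real M"
proof (induction r arbitrary: m)
  case (Suc r)
  then show ?case using Suc.IH[of m] Suc.IH[of "Suc m"] by (simp; linarith)
qed auto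

lemma Vf_mono_m: "Vf M r m \<le> Vf M r (Suc m)"
proof (induction r arbitrary: m)
  case 0 then show ?case by auto
next
  case (Suc r)
  show ?case
  proof (cases "M \<le> Suc m")
    case True then show ?thesis using Vf_le[of M "Suc r" m] by (simp add: Vf_top)
  next
    case False
    then show ?thesis using Suc.IH[of m] Suc.IH[of "Suc m"] by auto
  qed
qed

lemma avg1: "(x::real) = (y+z)/2 \<Longrightarrow> z \<le> y \<Longrightarrow> y \<le> w \<Longrightarrow> x \<le> w" by (simp add: field_simps)
lemma avg2: "(v::real) = (w + x)/2 \<Longrightarrow> x \<le> w \<Longrightarrow> x \<le> v" by (simp add: field_simps)

lemma Vf_mono_r: "Vf M r m \<le> Vf M (Suc r) m"
proof (induction r arbitrary: m)
  case 0 then show ?case by auto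
next
  case (Suc r)
  show ?case
  proof (cases "M \<le> m")
    case True then show ?thesis by (simp add: Vf_top)
  next
    case False
    have e1: "Vf M (Suc (Suc r)) m = (Vf M (Suc r) (Suc m) + Vf M (Suc r) m) / 2"
      using False Vf.simps(2)[of M "Suc r" m] by (simp del: Vf.simps)
    have e2: "Vf M (Suc r) m = (Vf M r (Suc m) + Vf M r m) / 2"
      using False by simp
    have i1: "Vf M r (Suc m) \<le> Vf M (Suc r) (Suc m)" by (rule Suc.IH)
    have i2: "Vf M r m \<le> Vf M r (Suc m)" by (rule Vf_mono_m)
    have "Vf M (Suc r) m \<le> Vf M (Suc r) (Suc m)" using avg1[OF e2 i2 i1] .
    then show ?thesis using avg2[OF e1] by blast
  qed
qed

lemma Vf_mono_r': "r \<le> r' \<Longrightarrow> Vf M r m \<le> Vf M r' m"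
proof (induction r' rule: dec_induct)
  case base then show ?case by simp
next
  case (step n) then show ?case using Vf_mono_r[of M n m] by linarith
qed

definition Wf :: "nat \<Rightarrow> nat \<Rightarrow> nat \<Rightarrow> real" where
  "Wf M r m = real M - ((2 * real M - real m - real r / 2)^2 + real r / 4) / (4 * real M)"

lemma Vf_ge_W: assumes "M > 0" shows "Wf M r m \<le> Vf M r m"
proof (induction r arbitrary: m)
  case 0
  show ?case
  proof (cases "M \<le> m")
    case True
    then show ?thesis using assms by (simp add: Wf_def)
  next
    case False
    have "(real M - real m) * (4 * real M) \<le> (2 * real M - real m)^2"
    proof -
      have "0 \<le> (real m) ^ 2" by simp
      then show ?thesis by (simp add: power2_eq_square algebra_simps)
    qed
    then have "real M - real m \<le> (2 * real M - real m)^2 / (4 * real M)"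
      using assms by (simp add: pos_le_divide_eq)
    then show ?thesis using False by (simp add: Wf_def)
  qed
next
  case (Suc r)
  show ?case
  proof (cases "M \<le> m")
    case True
    then show ?thesis using assms by (simp add: Wf_def)
  next
    case False
    have "Wf M (Suc r) m = (Wf M r (Suc m) + Wf M r m) / 2"
      using assms by (simp add: Wf_def field_simps power2_eq_square)
    then show ?thesis using False Suc.IH[of m] Suc.IH[of "Suc m"] by simp
  qed
qed

lemma Vf_final: assumes "M > 0" "4 * M \<le> L" shows "real M - 1 \<le> Vf M L 0"
proof -
  have "Wf M (4*M) 0 = real M - 1/4" using assms by (simp add: Wf_def field_simps)
  then show ?thesis using Vf_ge_W[OF assms(1), of "4*M" 0] Vf_mono_r'[OF assms(2), of M 0] by linarith
qed




lemma Ppoly'_alt: assumes "1 \<le> d" shows "Ppoly' d p c z = (\<Sum>j<d. c ! j * z ^ j) mod p"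
proof -
  have "{..<d} = insert 0 {1..<d}" using assms by auto
  then have "(\<Sum>j<d. c ! j * z ^ j) = c ! 0 + (\<Sum>j\<in>{1..<d}. c ! j * z ^ j)" by simp
  then show ?thesis unfolding Ppoly'_def by simp
qed

lemma Ppoly'_zero: assumes "1 \<le> d" shows "Ppoly' d p (replicate d 0) z = 0"
  unfolding Ppoly'_alt[OF assms] by simp

lemma poly_exists:
  fixes p d c0 :: nat and Z :: "nat set"
  assumes pp: "prime p" and d1: "1 \<le> d" and fZ: "finite Z" and cZ: "card Z \<le> d - 1"
    and Zr: "\<forall>z\<in>Z. 0 < z \<and> z < p" and c0: "c0 < p"
  shows "\<exists>c. length c = d \<and> (\<forall>j<d. c ! j < p) \<and> c ! 0 = c0 \<and> (\<forall>z\<in>Z. Ppoly' d p c z = 0)"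
proof -
  have "\<forall>z\<in>Z. \<exists>x. int p dvd (1 - x * int z)"
  proof
    fix z assume "z \<in> Z"
    then have "\<not> p dvd z" using Zr by (meson dvd_imp_le not_le)
    then have "coprime p z" by (rule prime_imp_coprime[OF pp])
    then have "coprime (int z) (int p)" by (simp add: coprime_commute)
    then have g: "gcd (int z) (int p) = 1" by simp
    obtain u v where "u * int z + v * int p = gcd (int z) (int p)" using bezout_int by blast
    then have "1 - u * int z = v * int p" using g by simp
    then show "\<exists>x. int p dvd (1 - x * int z)" by (metis dvd_triv_right)
  qed
  then obtain w where w: "\<And>z. z \<in> Z \<Longrightarrow> int p dvd (1 - w z * int z)" by metis
  define Q :: "int poly" where "Q = (\<Prod>z\<in>Z. [:1, - w z:])"
  have degQ: "degree Q \<le> card Z"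
  proof -
    have "degree Q \<le> sum (degree \<circ> (\<lambda>z. [:1, - w z:])) Z"
      unfolding Q_def using fZ by (rule degree_prod_sum_le)
    also have "\<dots> \<le> sum (\<lambda>z. 1) Z" by (rule sum_mono) auto
    finally show ?thesis by simp
  qed
  have Q0: "coeff Q 0 = 1"
    by (simp add: poly_0_coeff_0[symmetric] Q_def poly_prod)
  have Qz: "int p dvd poly Q (int z)" if "z \<in> Z" for z
  proof -
    have "int p dvd (1 - w z * int z)" using w[OF that] .
    also have "\<dots> dvd poly Q (int z)"
      unfolding Q_def poly_prod using fZ that
      using dvd_prodI[OF fZ that, of "\<lambda>x. poly [:1, - w x:] (int z)"] by (simp add: mult.commute)
    finally show ?thesis .
  qed
  define c where "c = map (\<lambda>j. nat ((int c0 * coeff Q j) mod int p)) [0..<d]"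
  have p0: "p > 0" using pp prime_gt_0_nat by blast
  have cj: "int (c ! j) = (int c0 * coeff Q j) mod int p" if "j < d" for j
    using that p0 by (simp add: c_def)
  have "Ppoly' d p c z = 0" if "z \<in> Z" for z
  proof -
    have "int (Ppoly' d p c z) = (\<Sum>j<d. int (c ! j) * int z ^ j) mod int p"
      unfolding Ppoly'_alt[OF d1] by (simp add: of_nat_mod)
    also have "\<dots> = (\<Sum>j<d. ((int c0 * coeff Q j) mod int p) * int z ^ j) mod int p"
      by (simp add: cj)
    also have "\<dots> = (\<Sum>j<d. (((int c0 * coeff Q j) mod int p) * int z ^ j) mod int p) mod int p"
      by (simp add: mod_sum_eq)
    also have "\<dots> = (\<Sum>j<d. ((int c0 * coeff Q j) * int z ^ j) mod int p) mod int p"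
      by (simp add: mod_mult_left_eq)
    also have "\<dots> = (\<Sum>j<d. (int c0 * coeff Q j) * int z ^ j) mod int p"
      by (simp add: mod_sum_eq)
    also have "(\<Sum>j<d. (int c0 * coeff Q j) * int z ^ j) = int c0 * (\<Sum>j<d. coeff Q j * int z ^ j)"
      by (simp add: sum_distrib_left mult.assoc)
    also have "(\<Sum>j<d. coeff Q j * int z ^ j) = (\<Sum>j\<le>degree Q. coeff Q j * int z ^ j)"
    proof (rule sum.mono_neutral_right)
      show "{..degree Q} \<subseteq> {..<d}" using degQ cZ d1 by auto
      show "\<forall>i\<in>{..<d} - {..degree Q}. coeff Q i * int z ^ i = 0"
        by (auto simp: coeff_eq_0)
    qed auto
    also have "\<dots> = poly Q (int z)" by (simp add: poly_altdef)
    finally have "int (Ppoly' d p c z) = (int c0 * poly Q (int z)) mod int p" .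
    also have "\<dots> = 0" using Qz[OF that] by auto
    finally show ?thesis by simp
  qed
  moreover have "length c = d" by (simp add: c_def)
  moreover have "\<forall>j<d. c ! j < p"
  proof (intro allI impI)
    fix j assume "j < d"
    then have "int (c ! j) < int p" using cj p0 by simp
    then show "c ! j < p" by simp
  qed
  moreover have "c ! 0 = c0"
  proof -
    have "int (c ! 0) = int c0" using cj[of 0] d1 Q0 c0 by simp
    then show ?thesis by simp
  qed
  ultimately show ?thesis by blast
qed



lemma exp_mono_fin:
  fixes f g :: "'a \<Rightarrow> real"
  assumes "finite (set_pmf pp)" "\<And>x. x \<in> set_pmf pp \<Longrightarrow> f x \<le> g x"
  shows "measure_pmf.expectation pp f \<le> measure_pmf.expectation pp g"
  by (rule integral_mono_AE) (use assms in \<open>auto simp: integrable_measure_pmf_finite AE_measure_pmf_iff\<close>)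

lemma exp_bind_fin:
  fixes h :: "'b \<Rightarrow> real"
  assumes "finite (set_pmf pp)" "\<And>x. x \<in> set_pmf pp \<Longrightarrow> finite (set_pmf (f x))"
  shows "measure_pmf.expectation (bind_pmf pp f) h = measure_pmf.expectation pp (\<lambda>x. measure_pmf.expectation (f x) h)"
proof -
  have "measure_pmf.expectation (bind_pmf pp f) h = (\<Sum>a\<in>set_pmf pp. pmf pp a *\<^sub>R measure_pmf.expectation (f a) h)"
    by (rule pmf_expectation_bind) (use assms in auto)
  also have "\<dots> = measure_pmf.expectation pp (\<lambda>x. measure_pmf.expectation (f x) h)"
    by (rule integral_measure_pmf[symmetric]) (use assms in auto)
  finally show ?thesis .
qed

lemma exp_two:
  fixes a c :: real
  shows "measure_pmf.expectation pp (\<lambda>q. if Q q then a else c) = c + (a - c) * measure_pmf.prob pp {q. Q q}"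
proof -
  have "(\<lambda>q. if Q q then a else c) = (\<lambda>q. c + (a - c) * indicator {q. Q q} q)"
    by (auto simp: fun_eq_iff indicator_def)
  then have "measure_pmf.expectation pp (\<lambda>q. if Q q then a else c) = measure_pmf.expectation pp (\<lambda>q. c + (a - c) * indicator {q. Q q} q)"
    by simp
  also have "\<dots> = measure_pmf.expectation pp (\<lambda>q. c) + measure_pmf.expectation pp (\<lambda>q. (a - c) * indicator {q. Q q} q)"
    by (subst Bochner_Integration.integral_add) (auto intro!: integrable_mult_right integrable_real_indicator simp: less_top[symmetric] measure_pmf.emeasure_finite)
  also have "measure_pmf.expectation pp (\<lambda>q. (a - c) * indicator {q. Q q} q) = (a - c) * measure_pmf.prob pp {q. Q q}"
    by (simp add: measure_pmf.emeasure_finite)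
  finally show ?thesis by simp
qed

lemma pc: fixes p :: "('a \<times> bool) pmf" shows "measure_pmf.prob p {q. snd q \<noteq> True} = 1 - measure_pmf.prob p {q. snd q}"
proof -
  have e: "{q. snd q \<noteq> True} = UNIV - {q. snd q}" by auto
  have "measure_pmf.prob p (space (measure_pmf p) - {q. snd q}) = 1 - measure_pmf.prob p {q. snd q}"
    by (rule measure_pmf.prob_compl) simp
  then show ?thesis unfolding e by simp
qed

locale constr =
  fixes k d L :: nat and p :: "nat \<Rightarrow> nat" and b :: "nat \<Rightarrow> (nat \<Rightarrow> bool) \<Rightarrow> nat" and A :: alg
  assumes k1: "1 \<le> k" and d1: "1 \<le> d" and L4: "4 * (k + 1) * d \<le> L"
    and pr: "\<forall>i \<ge> 1. prime (p i) \<and> 2 ^ card (Xblock i) \<le> p i"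
    and bi: "\<forall>i \<ge> 1. inj_on (b i) (Fcls i) \<and> b i ` Fcls i \<subseteq> {..<p i}"
    and dff: "dff_alg H_bullet A"
begin

definition "ii = L + 2"
definition "P = p ii"
definition "B = b ii"
definition "M = (k + 1) * d"
definition blk :: "nat \<Rightarrow> bool" where "blk x \<longleftrightarrow> x \<in> Xblock ii"
definition isrev :: "nat \<Rightarrow> entry \<Rightarrow> bool" where
  "isrev u e \<longleftrightarrow> (case e of (x, y, xh, yh, \<phi>) \<Rightarrow> \<not> y \<and> yh \<and> xh = u \<and> blk x \<and> blk u)"
definition cnt :: "nat \<Rightarrow> entry list \<Rightarrow> nat" where "cnt u S = length (filter (isrev u) S)"
definition crossers :: "entry list \<Rightarrow> nat set" where "crossers S = {u. d \<le> cnt u S}"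
definition Tr :: "entry list \<Rightarrow> nat set" where
  "Tr S = {x. blk x \<and> (\<exists>e\<in>set S. fst e = x \<and> fst (snd e))}"
definition fS :: "entry list \<Rightarrow> nat \<Rightarrow> bool" where
  "fS S = (\<lambda>x. x = 1 \<or> (x \<in> Tr S \<and> x \<notin> crossers S))"
definition Zs :: "nat \<Rightarrow> entry list \<Rightarrow> nat set" where
  "Zs u S = (\<lambda>e. fst e + 1 - 2 ^ ii) ` {e \<in> set S. isrev u e}"
definition Cf :: "nat \<Rightarrow> nat set \<Rightarrow> nat list" where
  "Cf c0 Z = (SOME c. length c = d \<and> (\<forall>j<d. c ! j < P) \<and> c ! 0 = c0 \<and> (\<forall>z\<in>Z. Ppoly' d P c z = 0))"
definition val :: "entry list \<Rightarrow> nat \<Rightarrow> nat \<Rightarrow> nat" where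
  "val S u z = (if u \<notin> crossers S \<and> cnt u S = d - 1 \<and> card (crossers S) = k
      then Ppoly' d P (Cf (B (fS S)) (Zs u S)) z else 0)"
definition minority :: "entry list \<Rightarrow> nat \<Rightarrow> bool" where
  "minority S x \<longleftrightarrow> measure_pmf.prob (A S x) {q. snd q} \<le> 1 / 2"
definition psiA :: "entry list \<Rightarrow> bool \<Rightarrow> expl" where
  "psiA S y = (\<lambda>x' xh. if blk x' \<and> blk xh
      then Some (indic {x', 2 ^ (ii + 1) + (if y then 0 else val S xh (x' + 1 - 2 ^ ii))})
      else if x' = 0 then None else Some (indic {x'}))"
definition psi1 :: expl where
  "psi1 = (\<lambda>x' xh. if x' = 0 then None else Some (indic {x'}))"
definition Adv :: adv where
  "Adv S = (if num_mistakes S < M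
     then (2 ^ ii + length S, minority S (2 ^ ii + length S), psiA S (minority S (2 ^ ii + length S)))
     else (1, True, psi1))"

definition vpath :: "entry list \<Rightarrow> bool" where
  "vpath S \<longleftrightarrow> (\<forall>j < length S. \<exists>xh yh.
     (xh, yh) \<in> set_pmf (A (take j S) (fst (Adv (take j S)))) \<and>
     S ! j = (fst (Adv (take j S)), fst (snd (Adv (take j S))), xh, yh,
              if yh = fst (snd (Adv (take j S))) then None
              else snd (snd (Adv (take j S))) (fst (Adv (take j S))) xh))"

lemma run_set: "set_pmf (run A Adv (Suc t)) =
  (\<Union>S\<in>set_pmf (run A Adv t). (\<lambda>q. S @ [(fst (Adv S), fst (snd (Adv S)), fst q, snd q,
      if snd q = fst (snd (Adv S)) then None else snd (snd (Adv S)) (fst (Adv S)) (fst q))]) ` set_pmf (A S (fst (Adv S))))"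
  by (auto simp: split_beta case_prod_beta)

lemma run_vpath: "S \<in> set_pmf (run A Adv t) \<Longrightarrow> length S = t \<and> vpath S"
proof (induction t arbitrary: S)
  case 0 then show ?case by (simp add: vpath_def)
next
  case (Suc t)
  from Suc.prems obtain S0 q where S0: "S0 \<in> set_pmf (run A Adv t)" and q: "q \<in> set_pmf (A S0 (fst (Adv S0)))"
    and S: "S = S0 @ [(fst (Adv S0), fst (snd (Adv S0)), fst q, snd q,
      if snd q = fst (snd (Adv S0)) then None else snd (snd (Adv S0)) (fst (Adv S0)) (fst q))]"
    unfolding run_set by blast
  from Suc.IH[OF S0] have l: "length S0 = t" and v: "vpath S0" by auto
  have "length S = Suc t" using S l by simp
  moreover have "vpath S"
    unfolding vpath_def
  proof (intro allI impI)
    fix j assume j: "j < length S"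
    show "\<exists>xh yh.
     (xh, yh) \<in> set_pmf (A (take j S) (fst (Adv (take j S)))) \<and>
     S ! j = (fst (Adv (take j S)), fst (snd (Adv (take j S))), xh, yh,
              if yh = fst (snd (Adv (take j S))) then None
              else snd (snd (Adv (take j S))) (fst (Adv (take j S))) xh)"
    proof (cases "j < t")
      case True
      then have "take j S = take j S0" "S ! j = S0 ! j" using S l by (auto simp: nth_append)
      then show ?thesis using v True l unfolding vpath_def by auto
    next
      case False
      then have "j = t" using j S l by simp
      then have "take j S = S0" "S ! j = (fst (Adv S0), fst (snd (Adv S0)), fst q, snd q,
      if snd q = fst (snd (Adv S0)) then None else snd (snd (Adv S0)) (fst (Adv S0)) (fst q))"
        using S l by auto
      then show ?thesis using q by (intro exI[of _ "fst q"] exI[of _ "snd q"]) auto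
    qed
  qed
  ultimately show ?case by blast
qed

lemma ii2: "2 \<le> ii" by (simp add: ii_def)
lemma L_lt: "L < 2 ^ ii"
proof -
  have "L < 2 ^ L" by (rule less_exp)
  also have "\<dots> \<le> 2 ^ ii" by (simp add: ii_def)
  finally show ?thesis .
qed
lemma card_Xblock: "card (Xblock i) = 2 ^ i" by (simp add: Xblock_def)
lemma primeP: "prime P" using pr ii2 by (simp add: P_def)
lemma P_big: "2 ^ ii < P"
proof -
  have "2 ^ ii < (2::nat) ^ (2 ^ ii)" by (rule less_exp)
  also have "\<dots> \<le> P" using pr ii2 by (simp add: P_def card_Xblock)
  finally show ?thesis .
qed
lemma M_pos: "1 \<le> M" using k1 d1 by (simp add: M_def)
lemma blk_iff: "blk x \<longleftrightarrow> 2 ^ ii \<le> x \<and> x < 2 ^ (ii + 1)" by (simp add: blk_def Xblock_def)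
lemma pow4: "(4::nat) \<le> 2 ^ ii" using ii2 power_increasing[of 2 ii "2::nat"] by simp
lemma not_blk1: "\<not> blk 1" using pow4 by (simp add: blk_iff)
lemma not_blk0: "\<not> blk 0" by (simp add: blk_iff)
lemma not_blk2: "\<not> blk 2"
  using pow4 by (simp add: blk_iff)
lemma blk_j: "j < 2 ^ ii \<Longrightarrow> blk (2 ^ ii + j)" by (simp add: blk_iff)
lemma blk_z: "blk x \<Longrightarrow> 1 \<le> x + 1 - 2 ^ ii \<and> x + 1 - 2 ^ ii < P"
  using P_big by (auto simp: blk_iff)

lemma fstAdv: "fst (Adv S) = (if num_mistakes S < M then 2 ^ ii + length S else 1)"
  by (simp add: Adv_def)

lemma entry_gen:
  assumes "vpath S" "j < length S"
  obtains xh yh where "(xh, yh) \<in> set_pmf (A (take j S) (fst (Adv (take j S))))"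
     "S ! j = (fst (Adv (take j S)), fst (snd (Adv (take j S))), xh, yh,
              if yh = fst (snd (Adv (take j S))) then None
              else snd (snd (Adv (take j S))) (fst (Adv (take j S))) xh)"
  using assms unfolding vpath_def by blast

lemma dff_pair: "(xh, yh) \<in> set_pmf (A S x) \<Longrightarrow> (xh, yh) \<in> H_bullet \<or> (\<exists>e\<in>set S. fst e = xh \<and> fst (snd e) = yh)"
  using dff unfolding dff_alg_def by force

lemma dff_blk: "(xh, yh) \<in> set_pmf (A S x) \<Longrightarrow> blk xh \<Longrightarrow> (\<exists>e\<in>set S. fst e = xh \<and> fst (snd e) = yh)"
  using dff_pair[of xh yh S x] not_blk1 not_blk2 by (auto simp: H_bullet_def)

lemma fst_entry: "vpath S \<Longrightarrow> j < length S \<Longrightarrow>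
   fst (S ! j) = (if num_mistakes (take j S) < M then 2 ^ ii + j else 1)"
  by (erule entry_gen) (auto simp: fstAdv)

lemma uniq: assumes "vpath S" "j < length S" "l < length S" "blk (fst (S ! j))" "fst (S ! j) = fst (S ! l)"
  shows "j = l"
  using fst_entry[OF assms(1,2)] fst_entry[OF assms(1,3)] assms(4,5) not_blk1
  by (auto split: if_splits)

lemma cnt_snoc: "cnt u (xs @ [e]) = cnt u xs + (if isrev u e then 1 else 0)"
  by (simp add: cnt_def)
lemma cnt_Nil: "cnt u [] = 0" by (simp add: cnt_def)
lemma take_Suc_snoc: "j < length S \<Longrightarrow> take (Suc j) S = take j S @ [S ! j]"
  by (simp add: take_Suc_conv_app_nth)
lemma cnt_take_mono: "j \<le> j' \<Longrightarrow> cnt u (take j S) \<le> cnt u (take j' S)"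
proof -
  assume "j \<le> j'"
  then have "take j S = take j (take j' S)" by (simp add: min_def)
  moreover have "take j' S = take j (take j' S) @ drop j (take j' S)" by (simp only: append_take_drop_id)
  ultimately show ?thesis unfolding cnt_def by (metis filter_append le_add1 length_append)
qed
lemma crossers_mono: "j \<le> j' \<Longrightarrow> crossers (take j S) \<subseteq> crossers (take j' S)"
proof
  fix u assume jj: "j \<le> j'" and u: "u \<in> crossers (take j S)"
  have "d \<le> cnt u (take j S)" using u by (simp add: crossers_def)
  also have "\<dots> \<le> cnt u (take j' S)" using jj by (rule cnt_take_mono)
  finally show "u \<in> crossers (take j' S)" by (simp add: crossers_def)
qed
lemma isrev_xh: "isrev u e \<Longrightarrow> u = fst (snd (snd e)) \<and> blk u"
  by (auto simp: isrev_def split: prod.splits)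
lemma crossers_sub: "crossers S \<subseteq> (\<lambda>e. fst (snd (snd e))) ` set S"
proof
  fix u assume "u \<in> crossers S"
  then have "0 < cnt u S" using d1 by (simp add: crossers_def)
  then obtain e where "e \<in> set S" "isrev u e" unfolding cnt_def by (metis filter_False length_0_conv neq0_conv)
  then show "u \<in> (\<lambda>e. fst (snd (snd e))) ` set S" using isrev_xh by (metis image_eqI)
qed
lemma crossers_fin: "finite (crossers S)"
  by (rule finite_subset[OF crossers_sub]) simp
lemma crossers_blk: "u \<in> crossers S \<Longrightarrow> blk u"
proof -
  assume "u \<in> crossers S"
  then have "0 < cnt u S" using d1 by (simp add: crossers_def)
  then obtain e where "e \<in> set S" "isrev u e" unfolding cnt_def by (metis filter_False length_0_conv neq0_conv)
  then show "blk u" by (auto simp: isrev_def split: prod.splits)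
qed
lemma crossers_Nil: "crossers [] = {}" using d1 by (auto simp: crossers_def cnt_Nil)
lemma crossers_snoc: "crossers (xs @ [e]) \<subseteq> insert (fst (snd (snd e))) (crossers xs)"
proof
  fix u assume u: "u \<in> crossers (xs @ [e])"
  show "u \<in> insert (fst (snd (snd e))) (crossers xs)"
  proof (cases "isrev u e")
    case True then show ?thesis using isrev_xh by blast
  next
    case False then show ?thesis using u by (simp add: crossers_def cnt_snoc)
  qed
qed

lemma mist_snoc: "num_mistakes (xs @ [(x, y, xh, yh, \<phi>)]) = num_mistakes xs + (if yh \<noteq> y then 1 else 0)"
  by (simp add: num_mistakes_def)
lemma mist_take_mono: "j \<le> j' \<Longrightarrow> num_mistakes (take j S) \<le> num_mistakes (take j' S)"
proof -
  assume "j \<le> j'"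
  then have "take j S = take j (take j' S)" by (simp add: min_def)
  moreover have "take j' S = take j (take j' S) @ drop j (take j' S)" by (simp only: append_take_drop_id)
  ultimately show ?thesis unfolding num_mistakes_def by (metis filter_append le_add1 length_append)
qed

lemma sum_rev_le: "finite U \<Longrightarrow> (\<Sum>u\<in>U. (if isrev u e then 1 else 0::nat)) \<le> (case e of (x, y, xh, yh, \<phi>) \<Rightarrow> if yh \<noteq> y then 1 else 0)"
proof -
  assume fU: "finite U"
  obtain x y xh yh \<phi> where e: "e = (x, y, xh, yh, \<phi>)" by (cases e) auto
  have "(\<lambda>u. if isrev u e then 1 else 0::nat) = (\<lambda>u. if u = xh then (if isrev xh e then 1 else 0) else 0)"
    by (auto simp: fun_eq_iff isrev_def e)
  then have "(\<Sum>u\<in>U. (if isrev u e then 1 else 0::nat)) = (\<Sum>u\<in>U. if u = xh then (if isrev xh e then 1 else 0) else 0)"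
    by (simp only:)
  also have "\<dots> = (if xh \<in> U then (if isrev xh e then 1 else 0) else 0)"
    using fU by (simp add: sum.delta)
  finally have "(\<Sum>u\<in>U. (if isrev u e then 1 else 0::nat)) = (if xh \<in> U then (if isrev xh e then 1 else 0) else 0)" .
  then show ?thesis by (auto simp: e isrev_def)
qed

lemma mist_ge: "finite U \<Longrightarrow> (\<Sum>u\<in>U. cnt u S) \<le> num_mistakes S"
proof (induction S rule: rev_induct)
  case Nil then show ?case by (simp add: cnt_Nil)
next
  case (snoc e xs)
  obtain x y xh yh \<phi> where e: "e = (x, y, xh, yh, \<phi>)" by (cases e) auto
  have "(\<Sum>u\<in>U. cnt u (xs @ [e])) = (\<Sum>u\<in>U. cnt u xs) + (\<Sum>u\<in>U. (if isrev u e then 1 else 0))"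
    by (simp add: cnt_snoc sum.distrib)
  also have "\<dots> \<le> num_mistakes xs + (if yh \<noteq> y then 1 else 0)"
    using snoc sum_rev_le[OF snoc.prems, of e] by (intro add_mono) (auto simp: e)
  finally show ?case by (simp add: e mist_snoc)
qed

definition tstar :: "entry list \<Rightarrow> nat" where
  "tstar S = (if \<exists>t<length S. k < card (crossers (take (Suc t) S))
     then LEAST t. t < length S \<and> k < card (crossers (take (Suc t) S)) else length S)"

lemma tstar_le: "tstar S \<le> length S"
proof (cases "\<exists>t<length S. k < card (crossers (take (Suc t) S))")
  case True
  then obtain t where t: "t < length S \<and> k < card (crossers (take (Suc t) S))" by blast
  have "(LEAST t. t < length S \<and> k < card (crossers (take (Suc t) S))) \<le> t" by (rule Least_le) (rule t)
  then show ?thesis using True t by (simp add: tstar_def)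
next
  case False then show ?thesis by (simp only: tstar_def if_not_P[OF False] if_False order_refl)
qed

lemma tstar_before: "t < tstar S \<Longrightarrow> card (crossers (take (Suc t) S)) \<le> k"
proof -
  assume a: "t < tstar S"
  show ?thesis
  proof (cases "\<exists>t<length S. k < card (crossers (take (Suc t) S))")
    case True
    then have "t < (LEAST t. t < length S \<and> k < card (crossers (take (Suc t) S)))" using a by (simp add: tstar_def)
    then have "\<not> (t < length S \<and> k < card (crossers (take (Suc t) S)))" by (rule not_less_Least)
    moreover have "t < length S" using a tstar_le[of S] by simp
    ultimately show ?thesis by simp
  next
    case False
    then have "tstar S = length S" by (simp only: tstar_def if_not_P[OF False] if_False)
    then have tl: "t < length S" using a by simp
    from False have "\<forall>t<length S. \<not> k < card (crossers (take (Suc t) S))" by simp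
    then have "\<not> k < card (crossers (take (Suc t) S))" using tl by blast
    then show ?thesis by simp
  qed
qed

lemma tstar_at: "tstar S < length S \<Longrightarrow> k < card (crossers (take (Suc (tstar S)) S))"
proof -
  assume a: "tstar S < length S"
  then have ex: "\<exists>t<length S. k < card (crossers (take (Suc t) S))" by (auto simp: tstar_def split: if_splits)
  then have "tstar S = (LEAST t. t < length S \<and> k < card (crossers (take (Suc t) S)))" by (simp add: tstar_def)
  moreover have "(LEAST t. t < length S \<and> k < card (crossers (take (Suc t) S))) < length S \<and>
      k < card (crossers (take (Suc (LEAST t. t < length S \<and> k < card (crossers (take (Suc t) S)))) S))"
    using ex by (metis (mono_tags, lifting) LeastI)
  ultimately show ?thesis by simp
qed

lemma tstar_card: "card (crossers (take (tstar S) S)) \<le> k"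
proof (cases "tstar S")
  case 0 then show ?thesis by (simp add: crossers_Nil)
next
  case (Suc t)
  then show ?thesis using tstar_before[of t S] by simp
qed

lemma Cf_spec:
  assumes "finite Z" "card Z \<le> d - 1" "\<forall>z\<in>Z. 0 < z \<and> z < P" "c0 < P"
  shows "length (Cf c0 Z) = d \<and> (\<forall>j<d. Cf c0 Z ! j < P) \<and> Cf c0 Z ! 0 = c0 \<and> (\<forall>z\<in>Z. Ppoly' d P (Cf c0 Z) z = 0)"
  unfolding Cf_def by (rule someI_ex) (rule poly_exists[OF primeP d1 assms])

lemma Zs_fin: "finite (Zs u S)" by (simp add: Zs_def)
lemma Zs_card: "card (Zs u S) \<le> cnt u S"
proof -
  have "Zs u S = (\<lambda>e. fst e + 1 - 2 ^ ii) ` set (filter (isrev u) S)" by (simp add: Zs_def)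
  then have "card (Zs u S) \<le> card (set (filter (isrev u) S))" by (simp add: card_image_le)
  also have "\<dots> \<le> length (filter (isrev u) S)" by (rule card_length)
  finally show ?thesis by (simp add: cnt_def)
qed
lemma isrev_blkx: "isrev u e \<Longrightarrow> blk (fst e)"
  by (auto simp: isrev_def split: prod.splits)
lemma Zs_range: "z \<in> Zs u S \<Longrightarrow> 0 < z \<and> z < P"
proof -
  assume "z \<in> Zs u S"
  then obtain e where "isrev u e" "z = fst e + 1 - 2 ^ ii" by (auto simp: Zs_def)
  then show ?thesis using blk_z[of "fst e"] isrev_blkx by auto
qed
lemma Zs_mem: "e \<in> set S \<Longrightarrow> isrev u e \<Longrightarrow> fst e + 1 - 2 ^ ii \<in> Zs u S"
  by (auto simp: Zs_def)

definition StS :: "entry list \<Rightarrow> entry list" where "StS S = take (tstar S) S"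
definition fT :: "entry list \<Rightarrow> nat \<Rightarrow> bool" where "fT S = fS (StS S)"
definition aT :: "entry list \<Rightarrow> nat \<Rightarrow> bool \<Rightarrow> nat list" where
  "aT S = (\<lambda>xh v. if \<not> v \<and> fT S xh then Cf (B (fT S)) (Zs xh (StS S)) else replicate d 0)"
definition psiT :: "entry list \<Rightarrow> expl" where "psiT S = psi_a d P ii (fT S) (aT S)"

lemma fT_Fcls: "fT S \<in> Fcls ii"
  using not_blk1 by (auto simp: fT_def fS_def Fcls_def Tr_def blk_def)

lemma BfT: "B (fT S) < P"
proof -
  have "b ii ` Fcls ii \<subseteq> {..<p ii}" using bi ii2 by auto
  then show ?thesis using fT_Fcls[of S] by (auto simp: B_def P_def)
qed

lemma fT_blk: "blk xh \<Longrightarrow> fT S xh \<Longrightarrow> cnt xh (StS S) < d"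
  using not_blk1 by (auto simp: fT_def fS_def crossers_def)

lemma aT_spec: assumes "blk xh" "fT S xh"
  shows "length (aT S xh False) = d \<and> (\<forall>j<d. aT S xh False ! j < P) \<and> aT S xh False ! 0 = B (fT S)
    \<and> (\<forall>z\<in>Zs xh (StS S). Ppoly' d P (aT S xh False) z = 0)"
proof -
  have "card (Zs xh (StS S)) \<le> d - 1" using Zs_card[of xh "StS S"] fT_blk[OF assms] by simp
  then show ?thesis using Cf_spec[OF Zs_fin _ _ BfT] Zs_range assms by (simp add: aT_def)
qed

lemma psiT_cls: "psiT S \<in> Psi_cls d P ii B (fT S)"
proof -
  have "\<forall>xh \<in> Xblock ii. \<forall>v. length (aT S xh v) = d \<and> (\<forall>j < d. aT S xh v ! j < P)"
  proof (intro ballI allI)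
    fix xh v assume xh: "xh \<in> Xblock ii"
    show "length (aT S xh v) = d \<and> (\<forall>j < d. aT S xh v ! j < P)"
    proof (cases "\<not> v \<and> fT S xh")
      case True then show ?thesis using aT_spec[of xh S] xh by (simp add: blk_def)
    next
      case False then show ?thesis using P_big by (auto simp: aT_def)
    qed
  qed
  moreover have "\<forall>xh \<in> Xblock ii. fT S xh \<longrightarrow> aT S xh False ! 0 = B (fT S)"
    using aT_spec by (simp add: blk_def)
  ultimately show ?thesis unfolding psiT_def Psi_cls_def by blast
qed

lemma Te_in: "(fT S, psiT S) \<in> consistent_teachers (Tcls d p b) H_bullet"
proof -
  have "(fT S, psiT S) \<in> Tcls_i d (p ii) ii (b ii)"
    using fT_Fcls psiT_cls by (auto simp: Tcls_i_def P_def B_def)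
  then have "(fT S, psiT S) \<in> Tcls d p b" using ii2 by (auto simp: Tcls_def)
  moreover have "fT S 2 = False" "fT S 1 = True"
    using not_blk2 by (auto simp: fT_def fS_def Tr_def)
  ultimately show ?thesis by (auto simp: consistent_teachers_def H_bullet_def)
qed

lemma round:
  assumes vp: "vpath S" and len: "length S = L" and t: "t < length S"
    and nE: "fst (S ! t) \<notin> crossers (StS S)"
  shows "case S ! t of (x, y, xh, yh, \<phi>) \<Rightarrow> fT S x = y \<and> (yh \<noteq> y \<longrightarrow> psiT S x xh = \<phi>)"
proof -
  define S' where "S' = take t S"
  have lS': "length S' = t" using t by (simp add: S'_def)
  obtain xh yh where q: "(xh, yh) \<in> set_pmf (A S' (fst (Adv S')))"
    and St: "S ! t = (fst (Adv S'), fst (snd (Adv S')), xh, yh, if yh = fst (snd (Adv S')) then None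
        else snd (snd (Adv S')) (fst (Adv S')) xh)"
    using entry_gen[OF vp t] unfolding S'_def by metis
  show ?thesis
  proof (cases "num_mistakes S' < M")
    case False
    then have "Adv S' = (1, True, psi1)" by (simp add: Adv_def)
    then show ?thesis using St not_blk1
      by (simp add: fT_def fS_def psiT_def psi_a_def psi1_def blk_def)
  next
    case True
    define x where "x = 2 ^ ii + t"
    define y where "y = minority S' x"
    have Adv': "Adv S' = (x, y, psiA S' y)" using True lS' by (simp add: Adv_def x_def y_def)
    have Se: "S ! t = (x, y, xh, yh, if yh = y then None else psiA S' y x xh)" using St Adv' by simp
    have bx: "blk x" using t len L_lt by (simp add: x_def blk_j)
    have bx': "x \<in> Xblock ii" using bx by (simp add: blk_def)
    have x0: "x \<noteq> 0" using bx not_blk0 by (metis)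
    have x1: "x \<noteq> 1" using bx not_blk1 by auto
    have q': "(xh, yh) \<in> set_pmf (A S' x)" using q Adv' by simp
    have fxS: "fst (S ! t) = x" using Se by simp
    have nbxh: "psiT S x xh = psiA S' y x xh" if "\<not> blk xh"
      using that x0 by (simp add: psiT_def psi_a_def psiA_def blk_def)
    have bxh: "psiT S x xh = psiA S' y x xh"
      if "blk xh" "Ppoly' d P (aT S xh (fT S x)) (x + 1 - 2 ^ ii) = (if y then 0 else val S' xh (x + 1 - 2 ^ ii))"
      using that bx' by (simp add: psiT_def psi_a_def psiA_def blk_def Ppoly_def)
    have notTr: "x \<notin> Tr (StS S)" if "\<not> y"
    proof
      assume "x \<in> Tr (StS S)"
      then obtain e where e: "e \<in> set (take (tstar S) S)" "fst e = x" "fst (snd e)"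
        by (auto simp: Tr_def StS_def)
      then obtain l where l: "l < length (take (tstar S) S)" "take (tstar S) S ! l = e"
        by (auto simp: in_set_conv_nth)
      then have l2: "l < length S" "S ! l = e" by auto
      have "l = t" using uniq[OF vp l2(1) t] e(2) fxS bx l2(2) by auto
      then show False using e(3) l2(2) Se that by auto
    qed
    consider (lt) "t < tstar S" | (eq) "t = tstar S" | (gt) "tstar S < t" by linarith
    then show ?thesis
    proof cases
      case lt
      have "t < length (StS S)" "StS S ! t = S ! t" using lt t by (auto simp: StS_def)
      then have inSt: "S ! t \<in> set (StS S)" by (metis nth_mem)
      have lab: "fT S x = y"
      proof (cases y)
        case True
        then have "x \<in> Tr (StS S)" using inSt bx Se by (force simp: Tr_def)
        then show ?thesis using nE fxS True by (simp add: fT_def fS_def)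
      next
        case False
        then show ?thesis using notTr x1 by (simp add: fT_def fS_def)
      qed
      have feat: "psiT S x xh = psiA S' y x xh" if yne: "yh \<noteq> y"
      proof (cases "blk xh")
        case False then show ?thesis by (rule nbxh)
      next
        case bxh_: True
        show ?thesis
        proof (rule bxh[OF bxh_])
          show "Ppoly' d P (aT S xh (fT S x)) (x + 1 - 2 ^ ii) = (if y then 0 else val S' xh (x + 1 - 2 ^ ii))"
          proof (cases y)
            case True
            then show ?thesis using lab d1 by (simp add: aT_def Ppoly'_zero)
          next
            case False
            then have yh: yh using yne by simp
            have rev: "isrev xh (S ! t)" using Se False yh bx bxh_ by (simp add: isrev_def)
            have v0: "val S' xh (x + 1 - 2 ^ ii) = 0"
            proof (rule ccontr)
              assume "val S' xh (x + 1 - 2 ^ ii) \<noteq> 0"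
              then have c: "xh \<notin> crossers S'" "cnt xh S' = d - 1" "card (crossers S') = k"
                by (auto simp: val_def split: if_splits)
              have "cnt xh (take (Suc t) S) = cnt xh S' + 1"
                using take_Suc_snoc[OF t] rev by (simp add: cnt_snoc S'_def)
              then have "xh \<in> crossers (take (Suc t) S)" using c d1 by (simp add: crossers_def)
              moreover have "crossers S' \<subseteq> crossers (take (Suc t) S)"
                unfolding S'_def by (rule crossers_mono) simp
              ultimately have "insert xh (crossers S') \<subseteq> crossers (take (Suc t) S)" by blast
              then have "card (insert xh (crossers S')) \<le> card (crossers (take (Suc t) S))"
                by (rule card_mono[OF crossers_fin])
              then have "k + 1 \<le> card (crossers (take (Suc t) S))" using c crossers_fin by simp
              then show False using tstar_before[OF lt] by simp
            qed
            have "Ppoly' d P (aT S xh False) (x + 1 - 2 ^ ii) = 0"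
            proof (cases "fT S xh")
              case True
              have "x + 1 - 2 ^ ii \<in> Zs xh (StS S)" using Zs_mem[OF inSt rev] fxS by simp
              then show ?thesis using aT_spec[OF bxh_ True] by blast
            next
              case False
              then show ?thesis using d1 by (simp add: aT_def Ppoly'_zero)
            qed
            then show ?thesis using lab False v0 by simp
          qed
        qed
      qed
      show ?thesis using Se lab feat by simp
    next
      case eq
      have Seq: "StS S = S'" by (simp add: StS_def S'_def eq)
      have c1: "k < card (crossers (take (Suc t) S))" using tstar_at[of S] t eq by simp
      have c2: "card (crossers S') \<le> k" using tstar_card[of S] eq by (simp add: S'_def)
      have sub: "crossers (take (Suc t) S) \<subseteq> insert xh (crossers S')"
        using crossers_snoc[of S' "S ! t"] take_Suc_snoc[OF t] Se by (simp add: S'_def)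
      have xhn: "xh \<notin> crossers S'"
      proof
        assume "xh \<in> crossers S'"
        then have "crossers (take (Suc t) S) \<subseteq> crossers S'" using sub by blast
        then have "card (crossers (take (Suc t) S)) \<le> card (crossers S')" by (rule card_mono[OF crossers_fin])
        then show False using c1 c2 by simp
      qed
      have xhin: "xh \<in> crossers (take (Suc t) S)"
      proof (rule ccontr)
        assume "xh \<notin> crossers (take (Suc t) S)"
        then have "crossers (take (Suc t) S) \<subseteq> crossers S'" using sub by blast
        then have "card (crossers (take (Suc t) S)) \<le> card (crossers S')" by (rule card_mono[OF crossers_fin])
        then show False using c1 c2 by simp
      qed
      have ck: "card (crossers S') = k"
      proof -
        have "card (crossers (take (Suc t) S)) \<le> card (insert xh (crossers S'))"
          using sub by (rule card_mono[OF finite_insert[THEN iffD2, OF crossers_fin]])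
        then show ?thesis using c1 c2 xhn crossers_fin by simp
      qed
      have cntS: "cnt xh (take (Suc t) S) = cnt xh S' + (if isrev xh (S ! t) then 1 else 0)"
        using take_Suc_snoc[OF t] by (simp add: cnt_snoc S'_def)
      have lt_d: "cnt xh S' < d" using xhn by (simp add: crossers_def)
      have ge_d: "d \<le> cnt xh (take (Suc t) S)" using xhin by (simp add: crossers_def)
      have rev: "isrev xh (S ! t)" using cntS lt_d ge_d by (auto split: if_splits)
      have cntd: "cnt xh S' = d - 1" using cntS lt_d ge_d rev by simp
      have ny: "\<not> y" and yh: yh and bxh_: "blk xh" using rev Se by (auto simp: isrev_def)
      have lab: "fT S x = y" using notTr[OF ny] x1 ny by (simp add: fT_def fS_def)
      have xhTr: "xh \<in> Tr S'" using dff_blk[OF q' bxh_] yh bxh_ by (auto simp: Tr_def)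
      have fxh: "fT S xh" using xhTr xhn by (simp add: fT_def fS_def Seq)
      have feat: "psiT S x xh = psiA S' y x xh"
      proof (rule bxh[OF bxh_])
        have "aT S xh (fT S x) = Cf (B (fS S')) (Zs xh S')"
          using lab ny fxh by (simp add: aT_def fT_def Seq)
        moreover have "val S' xh (x + 1 - 2 ^ ii) = Ppoly' d P (Cf (B (fS S')) (Zs xh S')) (x + 1 - 2 ^ ii)"
          using xhn cntd ck by (simp add: val_def)
        ultimately show "Ppoly' d P (aT S xh (fT S x)) (x + 1 - 2 ^ ii) = (if y then 0 else val S' xh (x + 1 - 2 ^ ii))"
          using ny by simp
      qed
      show ?thesis using Se lab feat by simp
    next
      case gt
      have tsl: "tstar S < length S" using gt t by simp
      define C where "C = crossers (take (Suc (tstar S)) S)"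
      have cC: "k + 1 \<le> card C" using tstar_at[OF tsl] by (simp add: C_def)
      have "M \<le> card C * d" using mult_le_mono1[OF cC, of d] by (simp add: M_def)
      also have "card C * d = (\<Sum>u\<in>C. d)" by simp
      also have "\<dots> \<le> (\<Sum>u\<in>C. cnt u (take (Suc (tstar S)) S))"
        by (rule sum_mono) (simp add: C_def crossers_def)
      also have "\<dots> \<le> num_mistakes (take (Suc (tstar S)) S)"
        by (rule mist_ge) (simp add: C_def crossers_fin)
      also have "\<dots> \<le> num_mistakes S'" unfolding S'_def by (rule mist_take_mono) (use gt in simp)
      finally show ?thesis using True by simp
    qed
  qed
qed

lemma consistent:
  assumes "S \<in> set_pmf (run A Adv L)"
  shows "\<exists>Te \<in> consistent_teachers (Tcls d p b) H_bullet. k_consistent k Te S"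
proof -
  have len: "length S = L" and vp: "vpath S" using run_vpath[OF assms] by auto
  define E where "E = {t. t < length S \<and> fst (S ! t) \<in> crossers (StS S)}"
  have inj: "inj_on (\<lambda>t. fst (S ! t)) E"
  proof (rule inj_onI)
    fix t1 t2 assume "t1 \<in> E" "t2 \<in> E" "fst (S ! t1) = fst (S ! t2)"
    then show "t1 = t2" using uniq[OF vp] crossers_blk by (auto simp: E_def)
  qed
  have "card E \<le> card (crossers (StS S))"
    by (rule card_inj_on_le[OF inj _ crossers_fin]) (auto simp: E_def)
  also have "\<dots> \<le> k" using tstar_card by (simp add: StS_def)
  finally have cE: "card E \<le> k" .
  have "k_consistent k (fT S, psiT S) S"
    unfolding k_consistent_def
  proof (intro exI[of _ E] conjI allI impI)
    show "E \<subseteq> {..<length S}" by (auto simp: E_def)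
    show "card E \<le> k" by (rule cE)
  next
    fix t assume "t < length S" "t \<notin> E"
    then show "case S ! t of (x, y, xh, yh, \<phi>) \<Rightarrow> fst (fT S, psiT S) x = y \<and> (yh \<noteq> y \<longrightarrow> snd (fT S, psiT S) x xh = \<phi>)"
      using round[OF vp len, of t] by (simp add: E_def)
  qed
  then show ?thesis using Te_in by blast
qed

lemma fin_A: "finite (set_pmf (A S x))"
proof -
  have "set_pmf (A S x) \<subseteq> H_bullet \<union> (\<lambda>(x, y, _, _, _). (x, y)) ` set S"
    using dff unfolding dff_alg_def by blast
  moreover have "finite (H_bullet \<union> (\<lambda>(x, y, _, _, _). (x, y)) ` set S)" by (simp add: H_bullet_def)
  ultimately show ?thesis by (rule finite_subset)
qed

lemma fin_run: "finite (set_pmf (run A Adv t))"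
proof (induction t)
  case 0 then show ?case by simp
next
  case (Suc t) then show ?case unfolding run_set using fin_A by auto
qed

definition ent :: "entry list \<Rightarrow> nat \<times> bool \<Rightarrow> entry" where
  "ent S q = (fst (Adv S), fst (snd (Adv S)), fst q, snd q,
      if snd q = fst (snd (Adv S)) then None else snd (snd (Adv S)) (fst (Adv S)) (fst q))"

lemma run_Suc': "run A Adv (Suc t) = bind_pmf (run A Adv t) (\<lambda>S. map_pmf (\<lambda>q. S @ [ent S q]) (A S (fst (Adv S))))"
proof -
  have "(\<lambda>S. case Adv S of (x, y, \<psi>) \<Rightarrow>
       map_pmf (\<lambda>(xh, yh). S @ [(x, y, xh, yh, if yh = y then None else \<psi> x xh)]) (A S x))
     = (\<lambda>S. map_pmf (\<lambda>q. S @ [ent S q]) (A S (fst (Adv S))))"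
  proof
    fix S
    obtain x y \<psi> where a: "Adv S = (x, y, \<psi>)" by (cases "Adv S") auto
    show "(case Adv S of (x, y, \<psi>) \<Rightarrow>
       map_pmf (\<lambda>(xh, yh). S @ [(x, y, xh, yh, if yh = y then None else \<psi> x xh)]) (A S x))
       = map_pmf (\<lambda>q. S @ [ent S q]) (A S (fst (Adv S)))"
      unfolding a by (auto simp: ent_def a intro!: map_pmf_cong)
  qed
  then show ?thesis by simp
qed

lemma prob_half: "1 / 2 \<le> measure_pmf.prob (A S x) {q. snd q \<noteq> minority S x}"
proof (cases "minority S x")
  case True
  then have h: "measure_pmf.prob (A S x) {q. snd q} \<le> 1 / 2" by (simp add: minority_def)
  have "measure_pmf.prob (A S x) {q. snd q \<noteq> True} = 1 - measure_pmf.prob (A S x) {q. snd q}"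
    by (rule pc)
  then show ?thesis using True h by simp
next
  case False
  then show ?thesis by (simp add: minority_def)
qed

lemma step_ineq:
  assumes tL: "t < L"
  shows "Vf M (L - t) (num_mistakes S) \<le>
    measure_pmf.expectation (A S (fst (Adv S))) (\<lambda>q. Vf M (L - Suc t) (num_mistakes (S @ [ent S q])))"
proof -
  define r where "r = L - Suc t"
  have Lt: "L - t = Suc r" using tL by (simp add: r_def)
  define m where "m = num_mistakes S"
  have mist: "num_mistakes (S @ [ent S q]) = m + (if snd q \<noteq> fst (snd (Adv S)) then 1 else 0)" for q
    by (simp add: ent_def mist_snoc m_def)
  have eq: "(\<lambda>q. Vf M r (num_mistakes (S @ [ent S q]))) =
     (\<lambda>q. if snd q \<noteq> fst (snd (Adv S)) then Vf M r (Suc m) else Vf M r m)"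
    by (auto simp: fun_eq_iff mist)
  show ?thesis
  proof (cases "M \<le> m")
    case True
    have "(\<lambda>q. Vf M r (num_mistakes (S @ [ent S q]))) = (\<lambda>q. real M)"
      using True by (auto simp: fun_eq_iff mist Vf_top)
    then show ?thesis using True by (simp add: Lt r_def[symmetric] Vf_top m_def[symmetric])
  next
    case False
    define x where "x = 2 ^ ii + length S"
    have y: "fst (snd (Adv S)) = minority S x" "fst (Adv S) = x"
      using False by (auto simp: Adv_def x_def m_def)
    have "measure_pmf.expectation (A S x) (\<lambda>q. if snd q \<noteq> minority S x then Vf M r (Suc m) else Vf M r m)
       = Vf M r m + (Vf M r (Suc m) - Vf M r m) * measure_pmf.prob (A S x) {q. snd q \<noteq> minority S x}"
      by (rule exp_two)
    also have "\<dots> \<ge> Vf M r m + (Vf M r (Suc m) - Vf M r m) * (1 / 2)"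
      using prob_half[of S x] Vf_mono_m[of M r m] by (intro add_left_mono mult_left_mono) auto
    finally have "Vf M r m + (Vf M r (Suc m) - Vf M r m) * (1 / 2) \<le>
       measure_pmf.expectation (A S x) (\<lambda>q. if snd q \<noteq> minority S x then Vf M r (Suc m) else Vf M r m)" .
    moreover have "Vf M (Suc r) m = Vf M r m + (Vf M r (Suc m) - Vf M r m) * (1 / 2)"
      using False by (simp add: field_simps)
    ultimately show ?thesis using eq y by (simp add: Lt r_def[symmetric] m_def[symmetric])
  qed
qed

lemma phi_ind: "t \<le> L \<Longrightarrow> Vf M L 0 \<le> measure_pmf.expectation (run A Adv t) (\<lambda>S. Vf M (L - t) (num_mistakes S))"
proof (induction t)
  case 0 then show ?case by (simp add: num_mistakes_def)
next
  case (Suc t)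
  have tL: "t < L" using Suc.prems by simp
  have "Vf M L 0 \<le> measure_pmf.expectation (run A Adv t) (\<lambda>S. Vf M (L - t) (num_mistakes S))"
    using Suc.IH tL by simp
  also have "\<dots> \<le> measure_pmf.expectation (run A Adv t)
      (\<lambda>S. measure_pmf.expectation (map_pmf (\<lambda>q. S @ [ent S q]) (A S (fst (Adv S)))) (\<lambda>S. Vf M (L - Suc t) (num_mistakes S)))"
    by (rule exp_mono_fin[OF fin_run]) (simp add: step_ineq[OF tL])
  also have "\<dots> = measure_pmf.expectation (run A Adv (Suc t)) (\<lambda>S. Vf M (L - Suc t) (num_mistakes S))"
    unfolding run_Suc' by (rule exp_bind_fin[symmetric]) (use fin_run fin_A in auto)
  finally show ?case .
qed

lemma exp_bound: "real M - 1 \<le> expected_mistakes A Adv L"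
proof -
  have "real M - 1 \<le> Vf M L 0" by (rule Vf_final) (use M_pos L4 in \<open>auto simp: M_def algebra_simps\<close>)
  also have "\<dots> \<le> measure_pmf.expectation (run A Adv L) (\<lambda>S. Vf M 0 (num_mistakes S))"
    using phi_ind[of L] by simp
  also have "\<dots> \<le> expected_mistakes A Adv L"
    unfolding expected_mistakes_def by (rule exp_mono_fin[OF fin_run]) simp
  finally show ?thesis .
qed

lemma adm: "adm_adv Adv"
  unfolding adm_adv_def
proof (rule allI, rule conjI)
  fix S
  show "1 \<le> fst (Adv S)" using pow4 by (simp add: Adv_def)
  show "\<forall>u v \<phi>. snd (snd (Adv S)) u v = Some \<phi> \<longrightarrow> is_feature \<phi>"
    using not_blk0 by (auto simp: Adv_def psiA_def psi1_def is_feature_def indic_def split: if_splits)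
qed

lemma final: "ereal (real M - 1) \<le> mistake_bound L k A (Tcls d p b) H_bullet"
proof -
  have mem: "Adv \<in> {Adv. adm_adv Adv \<and> (\<forall>S \<in> set_pmf (run A Adv L).
                      \<exists>Te \<in> consistent_teachers (Tcls d p b) H_bullet. k_consistent k Te S)}"
    using adm consistent by blast
  have "ereal (real M - 1) \<le> ereal (expected_mistakes A Adv L)" using exp_bound by simp
  also have "\<dots> \<le> mistake_bound L k A (Tcls d p b) H_bullet"
    unfolding mistake_bound_def by (rule SUP_upper[OF mem])
  finally show ?thesis .
qed

end

theorem mainTheorem16:
  fixes k d L :: nat
    and p :: "nat \<Rightarrow> nat"
    and b :: "nat \<Rightarrow> (nat \<Rightarrow> bool) \<Rightarrow> nat"
    and A :: alg
  assumes "1 \<le> k" and "1 \<le> d" and "4 * (k + 1) * d \<le> L"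
    and "\<forall>i \<ge> 1. prime (p i) \<and> 2 ^ card (Xblock i) \<le> p i"
    and "\<forall>i \<ge> 1. inj_on (b i) (Fcls i) \<and> b i ` Fcls i \<subseteq> {..<p i}"
    and "dff_alg H_bullet A"
  shows "ereal (real ((k + 1) * d) - 1) \<le> mistake_bound L k A (Tcls d p b) H_bullet"
proof -
  interpret constr k d L p b A using assms by unfold_locales
  show ?thesis using final by (simp add: M_def)
qed

end
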